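(* Let $\mathcal{H}=\mathbb{C}^2$ and let $\mathcal{UE}$ be the set of unital entanglement breaking quantum channels on $\mathcal{L}(\mathcal{H})$. For every density operator $\tau$ on $\mathcal{H}\otimes\mathcal{H}$, $$C(\tau,\mathcal{UE})=\max_{\Psi\in\mathcal{UE}}\operatorname{tr}[\tau J_\Psi]\le\frac12\left(1+\|N(\tau)\|\right),$$ where $\|N(\tau)\|=\max_{\boldsymbol{x}\in\mathbb{R}^3,\|\boldsymbol{x}\|=1}\|N(\tau)\boldsymbol{x}\|$ is the operator norm induced by the Euclidean norm.
   Context: A quantum channel is a linear, completely positive, trace preserving map $\Psi:\mathcal{L}(\mathcal{H})\to\mathcal{L}(\mathcal{H})$; it is unital if $\Psi(I)=I$, and entanglement breaking if $(\mathrm{id}\otimes\Psi)(\rho)$ is separable for every density operator $\rho$ on $\mathcal{H}\otimes\mathcal{H}$. $\{|0\rangle,|1\rangle\}$ is the computational basis; $J_\Psi=(\mathrm{id}\otimes\Psi)(P'_+)$ with $P'_+=\sum_{i,j=0}^1|i\rangle\langle j|\otimes|i\rangle\langle j|$. The correlation matrix is $N(X)_{ij}=\operatorname{tr}[X(\sigma_i\otimes\sigma_j)]$, $i,j\in\{1,2,3\}$, with $\sigma_i$ the Pauli matrices. *)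

theory Defs
  imports Complex_Main "Jordan_Normal_Form.Matrix"
begin

text \<open>The tensor product C^n (x) C^m is identified with C^(n*m) via |a> (x) |k> = e_(a*m+k)
  (Kronecker product convention). A superoperator on L(C^2) is a HOL function on complex
  matrices; only its values on 2 x 2 matrices matter.\<close>

definition mtrace :: "complex mat \<Rightarrow> complex" where
  "mtrace A = (\<Sum>i<dim_row A. A $$ (i, i))"

definition kron :: "complex mat \<Rightarrow> complex mat \<Rightarrow> complex mat" where
  "kron A B = mat (dim_row A * dim_row B) (dim_col A * dim_col B)
     (\<lambda>(i, j). A $$ (i div dim_row B, j div dim_col B) * B $$ (i mod dim_row B, j mod dim_col B))"

definition psd :: "nat \<Rightarrow> complex mat \<Rightarrow> bool" where
  "psd d A \<longleftrightarrow> A \<in> carrier_mat d d \<and>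
     (\<forall>v :: nat \<Rightarrow> complex. let q = (\<Sum>i<d. \<Sum>j<d. cnj (v i) * A $$ (i, j) * v j)
        in Im q = 0 \<and> Re q \<ge> 0)"

definition density :: "nat \<Rightarrow> complex mat \<Rightarrow> bool" where
  "density d \<rho> \<longleftrightarrow> psd d \<rho> \<and> mtrace \<rho> = 1"

text \<open>The (a,b)-th 2 x 2 block of a (2n) x (2n) matrix X = sum_ab |a><b| (x) X_ab.\<close>
definition block2 :: "complex mat \<Rightarrow> nat \<Rightarrow> nat \<Rightarrow> complex mat" where
  "block2 X a b = mat 2 2 (\<lambda>(k, l). X $$ (2 * a + k, 2 * b + l))"

text \<open>(id_n (x) \<Psi>)(X) for X on C^n (x) C^2: applies \<Psi> blockwise.\<close>
definition id_tensor :: "nat \<Rightarrow> (complex mat \<Rightarrow> complex mat) \<Rightarrow> complex mat \<Rightarrow> complex mat" where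
  "id_tensor n \<Psi> X = mat (n * 2) (n * 2)
     (\<lambda>(i, j). \<Psi> (block2 X (i div 2) (j div 2)) $$ (i mod 2, j mod 2))"

definition linear_superop :: "(complex mat \<Rightarrow> complex mat) \<Rightarrow> bool" where
  "linear_superop \<Psi> \<longleftrightarrow>
     (\<forall>A \<in> carrier_mat 2 2. \<Psi> A \<in> carrier_mat 2 2) \<and>
     (\<forall>A \<in> carrier_mat 2 2. \<forall>B \<in> carrier_mat 2 2. \<Psi> (A + B) = \<Psi> A + \<Psi> B) \<and>
     (\<forall>A \<in> carrier_mat 2 2. \<forall>c. \<Psi> (c \<cdot>\<^sub>m A) = c \<cdot>\<^sub>m \<Psi> A)"

definition completely_positive :: "(complex mat \<Rightarrow> complex mat) \<Rightarrow> bool" where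
  "completely_positive \<Psi> \<longleftrightarrow>
     (\<forall>n. \<forall>X. psd (n * 2) X \<longrightarrow> psd (n * 2) (id_tensor n \<Psi> X))"

definition trace_preserving :: "(complex mat \<Rightarrow> complex mat) \<Rightarrow> bool" where
  "trace_preserving \<Psi> \<longleftrightarrow> (\<forall>A \<in> carrier_mat 2 2. mtrace (\<Psi> A) = mtrace A)"

definition quantum_channel :: "(complex mat \<Rightarrow> complex mat) \<Rightarrow> bool" where
  "quantum_channel \<Psi> \<longleftrightarrow> linear_superop \<Psi> \<and> completely_positive \<Psi> \<and> trace_preserving \<Psi>"

definition unital :: "(complex mat \<Rightarrow> complex mat) \<Rightarrow> bool" where
  "unital \<Psi> \<longleftrightarrow> \<Psi> (1\<^sub>m 2) = 1\<^sub>m 2"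

definition separable :: "complex mat \<Rightarrow> bool" where
  "separable \<rho> \<longleftrightarrow> \<rho> \<in> carrier_mat 4 4 \<and>
     (\<exists>(k::nat) (p :: nat \<Rightarrow> real) A B.
        (\<forall>l<k. p l \<ge> 0 \<and> density 2 (A l) \<and> density 2 (B l)) \<and>
        (\<Sum>l<k. p l) = 1 \<and>
        (\<forall>i<4. \<forall>j<4. \<rho> $$ (i, j) = (\<Sum>l<k. complex_of_real (p l) * kron (A l) (B l) $$ (i, j))))"

definition entanglement_breaking :: "(complex mat \<Rightarrow> complex mat) \<Rightarrow> bool" where
  "entanglement_breaking \<Psi> \<longleftrightarrow>
     (\<forall>\<rho>. density 4 \<rho> \<longrightarrow> separable (id_tensor 2 \<Psi> \<rho>))"

definition UE :: "(complex mat \<Rightarrow> complex mat) set" where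
  "UE = {\<Psi>. quantum_channel \<Psi> \<and> unital \<Psi> \<and> entanglement_breaking \<Psi>}"

text \<open>P'_+ = sum_{i,j} |i><j| (x) |i><j| and the Choi matrix J_\<Psi> = (id (x) \<Psi>)(P'_+).\<close>
definition Pplus :: "complex mat" where
  "Pplus = mat 4 4 (\<lambda>(r, s). if r div 2 = r mod 2 \<and> s div 2 = s mod 2 then 1 else 0)"

definition choi :: "(complex mat \<Rightarrow> complex mat) \<Rightarrow> complex mat" where
  "choi \<Psi> = id_tensor 2 \<Psi> Pplus"

definition pauli :: "nat \<Rightarrow> complex mat" where
  "pauli k = (if k = 1 then mat 2 2 (\<lambda>(i, j). if i \<noteq> j then 1 else 0)
     else if k = 2 then mat 2 2 (\<lambda>(i, j). if i = 0 \<and> j = 1 then - \<i> else if i = 1 \<and> j = 0 then \<i> else 0)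
     else mat 2 2 (\<lambda>(i, j). if i = j then (if i = 0 then 1 else -1) else 0))"

text \<open>Correlation matrix N(X)_{ij} = tr[X (\<sigma>_i (x) \<sigma>_j)], i,j = 1..3, stored 0-indexed.
  The entries are real for Hermitian X; we take the real part.\<close>
definition corr :: "complex mat \<Rightarrow> real mat" where
  "corr X = mat 3 3 (\<lambda>(i, j). Re (mtrace (X * kron (pauli (i + 1)) (pauli (j + 1)))))"

definition opnorm3 :: "real mat \<Rightarrow> real" where
  "opnorm3 M = Sup {sqrt (\<Sum>i<3. (\<Sum>j<3. M $$ (i, j) * x j)\<^sup>2) | x :: nat \<Rightarrow> real.
                      (\<Sum>j<3. (x j)\<^sup>2) = 1}"

end

theory Submission
  imports Defs
begin

lemma mtrace_mult:
  assumes "A \<in> carrier_mat n n" "B \<in> carrier_mat n n"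
  shows "mtrace (A * B) = (\<Sum>i<n. \<Sum>k<n. A $$ (i,k) * B $$ (k,i))"
  using assms unfolding mtrace_def
  by (auto simp: scalar_prod_def atLeast0LessThan intro!: sum.cong)

lemma kron_idx:
  assumes "P \<in> carrier_mat 2 2" "Q \<in> carrier_mat 2 2" "i < 4" "j < 4"
  shows "kron P Q $$ (i,j) = P $$ (i div 2, j div 2) * Q $$ (i mod 2, j mod 2)"
  using assms unfolding kron_def by auto

lemma kron_carrier: "P \<in> carrier_mat 2 2 \<Longrightarrow> Q \<in> carrier_mat 2 2 \<Longrightarrow> kron P Q \<in> carrier_mat 4 4"
  unfolding kron_def by auto

lemma pauli_carrier: "pauli k \<in> carrier_mat 2 2"
  unfolding pauli_def by auto

definition tr4 :: "complex mat \<Rightarrow> complex mat \<Rightarrow> complex mat \<Rightarrow> complex" where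
  "tr4 \<tau> P Q = (\<Sum>i<4. \<Sum>k<4. \<tau> $$ (i,k) * (P $$ (k div 2, i div 2) * Q $$ (k mod 2, i mod 2)))"

lemma mtrace_kron:
  assumes "\<tau> \<in> carrier_mat 4 4" "P \<in> carrier_mat 2 2" "Q \<in> carrier_mat 2 2"
  shows "mtrace (\<tau> * kron P Q) = tr4 \<tau> P Q"
  unfolding tr4_def using assms
  by (simp add: mtrace_mult kron_carrier kron_idx)

lemma corr_idx:
  assumes "\<tau> \<in> carrier_mat 4 4" "i < 3" "j < 3"
  shows "corr \<tau> $$ (i,j) = Re (tr4 \<tau> (pauli (i+1)) (pauli (j+1)))"
  using assms unfolding corr_def by (simp add: mtrace_kron pauli_carrier)

lemma sum2: "(\<Sum>i<(2::nat). f i) = f 0 + f 1" by (simp add: eval_nat_numeral)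
lemma sum3: "(\<Sum>i<(3::nat). f i) = f 0 + f 1 + f 2" by (simp add: eval_nat_numeral)
lemma sum4: "(\<Sum>i<(4::nat). f i) = f 0 + f 1 + f 2 + f 3" by (simp add: eval_nat_numeral)

definition bx :: "complex mat \<Rightarrow> nat \<Rightarrow> real" where
  "bx A i = (if i = 0 then 2 * Re (A $$ (0,1)) else if i = 1 then - 2 * Im (A $$ (0,1))
     else Re (A $$ (0,0)) - Re (A $$ (1,1)))"

lemma density_bloch:
  assumes "density 2 A"
  shows "(\<Sum>i<3. (bx A i)\<^sup>2) \<le> 1"
    "A $$ (0,0) = complex_of_real ((1 + bx A 2) / 2)"
    "A $$ (1,1) = complex_of_real ((1 - bx A 2) / 2)"
    "A $$ (0,1) = Complex (bx A 0 / 2) (- bx A 1 / 2)"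
    "A $$ (1,0) = Complex (bx A 0 / 2) (bx A 1 / 2)"
proof -
  have P: "\<And>v. Im (\<Sum>i<2. \<Sum>j<2. cnj (v i) * A $$ (i, j) * v j) = 0 \<and> Re (\<Sum>i<2. \<Sum>j<2. cnj (v i) * A $$ (i, j) * v j) \<ge> 0"
    using assms unfolding density_def psd_def Let_def by auto
  have tr: "A $$ (0,0) + A $$ (1,1) = 1"
    using assms unfolding density_def psd_def mtrace_def by (auto simp: eval_nat_numeral)
  define \<alpha> where "\<alpha> = A $$ (0,0)"
  define \<beta> where "\<beta> = A $$ (0,1)"
  define \<gamma> where "\<gamma> = A $$ (1,0)"
  define \<delta> where "\<delta> = A $$ (1,1)"
  have q: "(\<Sum>i<2. \<Sum>j<2. cnj (v i) * A $$ (i, j) * v j) = cnj (v 0) * \<alpha> * v 0 + cnj (v 0) * \<beta> * v 1 + cnj (v 1) * \<gamma> * v 0 + cnj (v 1) * \<delta> * v 1" for v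
    unfolding \<alpha>_def \<beta>_def \<gamma>_def \<delta>_def by (simp add: eval_nat_numeral)
  have 1: "Im \<alpha> = 0 \<and> Re \<alpha> \<ge> 0" using P[of "\<lambda>i. if i = 0 then 1 else 0"] unfolding q by simp
  have 2: "Im \<delta> = 0 \<and> Re \<delta> \<ge> 0" using P[of "\<lambda>i. if i = 1 then 1 else 0"] unfolding q by simp
  have 3: "Im (\<beta> + \<gamma>) = 0" using P[of "\<lambda>i. 1"] 1 2 unfolding q by simp
  have 4: "Re (\<beta> - \<gamma>) = 0" using P[of "\<lambda>i. if i = 0 then 1 else \<i>"] 1 2 unfolding q by simp
  have g: "\<gamma> = cnj \<beta>" using 3 4 by (simp add: complex_eq_iff)
  have 5: "Re \<alpha> * (Re \<alpha> * Re \<delta> - (Re \<beta>)\<^sup>2 - (Im \<beta>)\<^sup>2) \<ge> 0"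
    using P[of "\<lambda>i. if i = 0 then - \<beta> else \<alpha>"] 1 2 g unfolding q
    by (simp add: power2_eq_square algebra_simps)
  have 6: "Re \<delta> * (Re \<alpha> * Re \<delta> - (Re \<beta>)\<^sup>2 - (Im \<beta>)\<^sup>2) \<ge> 0"
    using P[of "\<lambda>i. if i = 0 then \<delta> else - \<gamma>"] 1 2 g unfolding q
    by (simp add: power2_eq_square algebra_simps)
  have tr': "Re \<alpha> + Re \<delta> = 1" using tr unfolding \<alpha>_def \<delta>_def by (metis one_complex.sel(1) plus_complex.sel(1))
  have det: "Re \<alpha> * Re \<delta> - (Re \<beta>)\<^sup>2 - (Im \<beta>)\<^sup>2 \<ge> 0"
  proof -
    have "(Re \<alpha> + Re \<delta>) * (Re \<alpha> * Re \<delta> - (Re \<beta>)\<^sup>2 - (Im \<beta>)\<^sup>2) = Re \<alpha> * (Re \<alpha> * Re \<delta> - (Re \<beta>)\<^sup>2 - (Im \<beta>)\<^sup>2) + Re \<delta> * (Re \<alpha> * Re \<delta> - (Re \<beta>)\<^sup>2 - (Im \<beta>)\<^sup>2)"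
      by (simp add: distrib_right)
    then show ?thesis using 5 6 tr' by simp
  qed
  show "(\<Sum>i<3. (bx A i)\<^sup>2) \<le> 1"
  proof -
    have "(Re \<alpha> + Re \<delta>) * (Re \<alpha> + Re \<delta>) = 1" using tr' by simp
    then have sq: "Re \<alpha> * Re \<alpha> + Re \<delta> * Re \<delta> + 2 * (Re \<alpha> * Re \<delta>) = 1"
      by (simp add: algebra_simps)
    have b: "bx A 0 = 2 * Re \<beta>" "bx A 1 = -2*Im \<beta>" "bx A 2 = Re \<alpha> - Re \<delta>"
      by (simp_all add: bx_def \<alpha>_def \<beta>_def \<delta>_def)
    show "(\<Sum>i<3. (bx A i)\<^sup>2) \<le> 1" using det sq unfolding sum3 b
      by (simp add: power2_eq_square algebra_simps)
  qed
  show "A $$ (0,0) = complex_of_real ((1 + bx A 2) / 2)"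
    using 1 2 tr' unfolding bx_def \<alpha>_def[symmetric] \<beta>_def[symmetric] \<delta>_def[symmetric]
    by (simp add: complex_eq_iff)
  show "A $$ (1,1) = complex_of_real ((1 - bx A 2) / 2)"
    using 1 2 tr' unfolding bx_def \<alpha>_def[symmetric] \<beta>_def[symmetric] \<delta>_def[symmetric]
    by (simp add: complex_eq_iff)
  show "A $$ (0,1) = Complex (bx A 0 / 2) (- bx A 1 / 2)"
    unfolding bx_def \<beta>_def[symmetric] by (simp add: complex_eq_iff)
  show "A $$ (1,0) = Complex (bx A 0 / 2) (bx A 1 / 2)"
    using g unfolding bx_def \<beta>_def[symmetric] \<gamma>_def[symmetric] by (simp add: complex_eq_iff)
qed

lemma key:
  fixes a b :: "nat \<Rightarrow> real"
  assumes A: "A $$ (0,0) = complex_of_real ((1 + a 2) / 2)"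
    "A $$ (1,1) = complex_of_real ((1 - a 2) / 2)"
    "A $$ (0,1) = Complex (a 0 / 2) (- a 1 / 2)"
    "A $$ (1,0) = Complex (a 0 / 2) (a 1 / 2)"
  and B: "B $$ (0,0) = complex_of_real ((1 + b 2) / 2)"
    "B $$ (1,1) = complex_of_real ((1 - b 2) / 2)"
    "B $$ (0,1) = Complex (b 0 / 2) (- b 1 / 2)"
    "B $$ (1,0) = Complex (b 0 / 2) (b 1 / 2)"
  shows "Re (tr4 \<tau> A B) = 1/4 * (Re (tr4 \<tau> (1\<^sub>m 2) (1\<^sub>m 2))
     + (\<Sum>i<3. a i * Re (tr4 \<tau> (pauli (i+1)) (1\<^sub>m 2)))
     + (\<Sum>j<3. b j * Re (tr4 \<tau> (1\<^sub>m 2) (pauli (j+1))))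
     + (\<Sum>i<3. \<Sum>j<3. a i * b j * Re (tr4 \<tau> (pauli (i+1)) (pauli (j+1)))))"
  unfolding tr4_def sum4 sum3
  apply (simp add: A B A[unfolded One_nat_def] B[unfolded One_nat_def] pauli_def)
  apply (simp add: field_simps)
  done

lemma cs3:
  fixes a0 a1 a2 y0 y1 y2 :: real
  shows "(a0*y0 + a1*y1 + a2*y2)\<^sup>2 \<le> (a0\<^sup>2 + a1\<^sup>2 + a2\<^sup>2) * (y0\<^sup>2 + y1\<^sup>2 + y2\<^sup>2)"
proof -
  have "(a0\<^sup>2 + a1\<^sup>2 + a2\<^sup>2) * (y0\<^sup>2 + y1\<^sup>2 + y2\<^sup>2) - (a0*y0 + a1*y1 + a2*y2)\<^sup>2
     = (a0*y1-a1*y0)\<^sup>2+(a0*y2-a2*y0)\<^sup>2+(a1*y2-a2*y1)\<^sup>2"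
    by (simp add: power2_eq_square algebra_simps)
  moreover have "(a0*y1-a1*y0)\<^sup>2+(a0*y2-a2*y0)\<^sup>2+(a1*y2-a2*y1)\<^sup>2 \<ge> 0" by simp
  ultimately show ?thesis by linarith
qed

lemma abs_le1: "(\<Sum>j<3. (x j)\<^sup>2) = (1::real) \<Longrightarrow> (j::nat) < 3 \<Longrightarrow> \<bar>x j\<bar> \<le> 1"
proof -
  assume s: "(\<Sum>j<3. (x j)\<^sup>2) = (1::real)" and j: "(j::nat) < 3"
  have "(x j)\<^sup>2 \<le> (\<Sum>j<3. (x j)\<^sup>2)"
    by (rule member_le_sum) (use j in auto)
  then have "(x j)\<^sup>2 \<le> 1\<^sup>2" using s by simp
  then show ?thesis using abs_le_square_iff by (metis abs_one)
qed

lemma opnorm_bdd: "bdd_above {sqrt (\<Sum>i<3. (\<Sum>j<3. M $$ (i, j) * x j)\<^sup>2) | x :: nat \<Rightarrow> real.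
                      (\<Sum>j<3. (x j)\<^sup>2) = 1}"
proof -
  define R where "R i = (\<Sum>j<3. \<bar>M $$ (i, j)\<bar>)" for i
  have r: "\<bar>\<Sum>j<3. M $$ (i, j) * x j\<bar> \<le> R i" if "(\<Sum>j<3. (x j)\<^sup>2) = 1" for x i
  proof -
    have "\<bar>\<Sum>j<3. M $$ (i, j) * x j\<bar> \<le> (\<Sum>j<3. \<bar>M $$ (i, j) * x j\<bar>)" by (rule sum_abs)
    also have "\<dots> \<le> R i" unfolding R_def
    proof (rule sum_mono)
      fix j assume "j \<in> {..<3::nat}"
      then have "\<bar>x j\<bar> \<le> 1" using abs_le1[OF that] by auto
      then show "\<bar>M $$ (i, j) * x j\<bar> \<le> \<bar>M $$ (i, j)\<bar>"
        by (simp add: abs_mult mult_left_le)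
    qed
    finally show ?thesis .
  qed
  show ?thesis
  proof (rule bdd_aboveI)
    fix y assume "y \<in> {sqrt (\<Sum>i<3. (\<Sum>j<3. M $$ (i, j) * x j)\<^sup>2) | x :: nat \<Rightarrow> real.
                      (\<Sum>j<3. (x j)\<^sup>2) = 1}"
    then obtain x where x: "(\<Sum>j<3. (x j)\<^sup>2) = 1" and y: "y = sqrt (\<Sum>i<3. (\<Sum>j<3. M $$ (i, j) * x j)\<^sup>2)"
      by auto
    have "(\<Sum>i<3. (\<Sum>j<3. M $$ (i, j) * x j)\<^sup>2) \<le> (\<Sum>i<3. (R i)\<^sup>2)"
    proof (rule sum_mono)
      fix i show "(\<Sum>j<3. M $$ (i, j) * x j)\<^sup>2 \<le> (R i)\<^sup>2"
        using r[OF x, of i] by (metis abs_ge_zero abs_le_square_iff abs_of_nonneg order_trans power2_abs)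
    qed
    then show "y \<le> sqrt (\<Sum>i<3. (R i)\<^sup>2)" unfolding y by simp
  qed
qed

lemma opnorm_upper: "(\<Sum>j<3. (x j)\<^sup>2) = 1 \<Longrightarrow> sqrt (\<Sum>i<3. (\<Sum>j<3. M $$ (i, j) * x j)\<^sup>2) \<le> opnorm3 M"
  unfolding opnorm3_def by (rule cSup_upper[OF _ opnorm_bdd]) auto

lemma opnorm_nonneg: "opnorm3 M \<ge> 0"
proof -
  have "(\<Sum>j<3. ((\<lambda>j::nat. if j = 0 then 1 else 0::real) j)\<^sup>2) = 1" by (simp add: sum3)
  from opnorm_upper[OF this, of M] show ?thesis by (meson order_trans real_sqrt_ge_zero zero_le_power2 sum_nonneg)
qed

lemma opnorm_bound:
  fixes M :: "real mat" and a b :: "nat \<Rightarrow> real"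
  assumes ha: "(\<Sum>i<3. (a i)\<^sup>2) \<le> 1" and hb: "(\<Sum>i<3. (b i)\<^sup>2) \<le> 1"
  shows "(\<Sum>i<3. \<Sum>j<3. a i * b j * M $$ (i,j)) \<le> opnorm3 M"
proof -
  define y where "y i = (\<Sum>j<3. M $$ (i, j) * b j)" for i
  have lhs: "(\<Sum>i<3. \<Sum>j<3. a i * b j * M $$ (i,j)) = (\<Sum>i<3. a i * y i)"
    unfolding y_def by (simp add: sum_distrib_left mult.assoc mult.commute[of "b _"])
  have "(\<Sum>i<3. a i * y i)\<^sup>2 \<le> (\<Sum>i<3. (a i)\<^sup>2) * (\<Sum>i<3. (y i)\<^sup>2)"
    unfolding sum3 by (rule cs3)
  also have "\<dots> \<le> (\<Sum>i<3. (y i)\<^sup>2)"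
    using ha by (simp add: mult_left_le_one_le sum_nonneg)
  finally have c1: "(\<Sum>i<3. a i * y i) \<le> sqrt (\<Sum>i<3. (y i)\<^sup>2)"
    by (simp add: real_le_rsqrt)
  define nb where "nb = sqrt (\<Sum>i<3. (b i)\<^sup>2)"
  have nb1: "nb \<le> 1" unfolding nb_def using hb by simp
  have c2: "sqrt (\<Sum>i<3. (y i)\<^sup>2) \<le> opnorm3 M"
  proof (cases "nb = 0")
    case True
    then have "(\<Sum>i<3. (b i)\<^sup>2) = 0" unfolding nb_def by simp
    then have "\<forall>i\<in>{..<3::nat}. (b i)\<^sup>2 = 0" by (subst sum_nonneg_eq_0_iff[symmetric]) auto
    then have "y i = 0" for i unfolding y_def by (auto intro!: sum.neutral)
    then show ?thesis using opnorm_nonneg by simp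
  next
    case False
    have "nb \<ge> 0" unfolding nb_def by (simp add: sum_nonneg)
    then have nbpos: "nb > 0" using False by linarith
    define x where "x j = b j / nb" for j
    have "(\<Sum>j<3. (x j)\<^sup>2) = (\<Sum>j<3. (b j)\<^sup>2) / nb\<^sup>2"
      unfolding x_def by (simp add: power_divide sum_divide_distrib)
    also have "\<dots> = 1" using nbpos unfolding nb_def by (simp add: sum_nonneg)
    finally have x1: "(\<Sum>j<3. (x j)\<^sup>2) = 1" .
    have yx: "y i = nb * (\<Sum>j<3. M $$ (i, j) * x j)" for i
      unfolding y_def x_def using nbpos by (simp add: sum_distrib_left)
    have "(\<Sum>i<3. (y i)\<^sup>2) = nb\<^sup>2 * (\<Sum>i<3. (\<Sum>j<3. M $$ (i, j) * x j)\<^sup>2)"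
      proof -
      have "(y i)\<^sup>2 = nb\<^sup>2 * (\<Sum>j<3. M $$ (i, j) * x j)\<^sup>2" for i
        by (simp only: yx power_mult_distrib)
      then have "(\<Sum>i<3. (y i)\<^sup>2) = (\<Sum>i<3. nb\<^sup>2 * (\<Sum>j<3. M $$ (i, j) * x j)\<^sup>2)" by simp
      also have "\<dots> = nb\<^sup>2 * (\<Sum>i<3. (\<Sum>j<3. M $$ (i, j) * x j)\<^sup>2)" by (rule sum_distrib_left[symmetric])
      finally show ?thesis .
    qed
    then have "sqrt (\<Sum>i<3. (y i)\<^sup>2) = nb * sqrt (\<Sum>i<3. (\<Sum>j<3. M $$ (i, j) * x j)\<^sup>2)"
      using nbpos by (simp add: real_sqrt_mult)
    also have "\<dots> \<le> nb * opnorm3 M"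
      using opnorm_upper[OF x1, of M] nbpos by (simp add: mult_left_mono)
    also have "\<dots> \<le> opnorm3 M" using nb1 opnorm_nonneg[of M] by (metis mult.commute mult_left_le)
    finally show ?thesis .
  qed
  show ?thesis using lhs c1 c2 by linarith
qed

lemma re_sum_real: "Re (\<Sum>l\<in>S. complex_of_real (p l) * z l) = (\<Sum>l\<in>S. p l * Re (z l))"
  by (induct S rule: infinite_finite_induct) auto

lemma im_sum_real: "Im (\<Sum>l\<in>S. complex_of_real (p l) * z l) = (\<Sum>l\<in>S. p l * Im (z l))"
  by (induct S rule: infinite_finite_induct) auto

theorem proposition3:
  fixes \<tau> :: "complex mat" and \<Psi> :: "complex mat \<Rightarrow> complex mat"
  assumes "density 4 \<tau>"
    and "\<Psi> \<in> UE"
  shows "Re (mtrace (\<tau> * choi \<Psi>)) \<le> (1 + opnorm3 (corr \<tau>)) / 2"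
proof -
  have \<tau>c: "\<tau> \<in> carrier_mat 4 4" and tr\<tau>: "mtrace \<tau> = 1"
    using assms(1) unfolding density_def psd_def by auto
  have lin: "linear_superop \<Psi>" and tp: "trace_preserving \<Psi>" and un: "unital \<Psi>"
    and eb: "entanglement_breaking \<Psi>"
    using assms(2) unfolding UE_def quantum_channel_def by auto
  have \<Psi>c: "\<And>X. X \<in> carrier_mat 2 2 \<Longrightarrow> \<Psi> X \<in> carrier_mat 2 2"
    and \<Psi>add: "\<And>X Y. X \<in> carrier_mat 2 2 \<Longrightarrow> Y \<in> carrier_mat 2 2 \<Longrightarrow> \<Psi> (X + Y) = \<Psi> X + \<Psi> Y"
    and \<Psi>sm: "\<And>X c. X \<in> carrier_mat 2 2 \<Longrightarrow> \<Psi> (c \<cdot>\<^sub>m X) = c \<cdot>\<^sub>m \<Psi> X"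
    using lin unfolding linear_superop_def by auto
  define E where "E a b = block2 Pplus a b" for a b
  have Ec: "E a b \<in> carrier_mat 2 2" for a b unfolding E_def block2_def by auto
  define \<rho> where "\<rho> = (1/2 :: complex) \<cdot>\<^sub>m Pplus"
  have \<rho>dens: "density 4 \<rho>"
  proof -
    have q: "(\<Sum>i<4. \<Sum>j<4. cnj (v i) * \<rho> $$ (i, j) * v j) = complex_of_real ((cmod (v 0 + v 3))\<^sup>2 / 2)"
      for v :: "nat \<Rightarrow> complex"
    proof -
      have "(\<Sum>i<4. \<Sum>j<4. cnj (v i) * \<rho> $$ (i, j) * v j) = (v 0 + v 3) * cnj (v 0 + v 3) / 2"
        unfolding sum4 by (simp add: \<rho>_def Pplus_def field_simps)
      also have "\<dots> = complex_of_real ((cmod (v 0 + v 3))\<^sup>2) / 2"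
        by (simp only: complex_norm_square)
      also have "\<dots> = complex_of_real ((cmod (v 0 + v 3))\<^sup>2 / 2)"
        by simp
      finally show ?thesis .
    qed
    have "psd 4 \<rho>" unfolding psd_def Let_def q by (simp add: \<rho>_def Pplus_def)
    moreover have "mtrace \<rho> = 1" unfolding mtrace_def by (simp add: \<rho>_def Pplus_def sum4)
    ultimately show ?thesis unfolding density_def by simp
  qed
  define \<sigma> where "\<sigma> = id_tensor 2 \<Psi> \<rho>"
  have "separable \<sigma>" using eb \<rho>dens unfolding entanglement_breaking_def \<sigma>_def by simp
  then obtain k :: nat and p :: "nat \<Rightarrow> real" and A B where
    pAB: "\<forall>l<k. p l \<ge> 0 \<and> density 2 (A l) \<and> density 2 (B l)" and
    p1: "(\<Sum>l<k. p l) = 1" and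
    \<sigma>eq: "\<forall>i<4. \<forall>j<4. \<sigma> $$ (i, j) = (\<Sum>l<k. complex_of_real (p l) * kron (A l) (B l) $$ (i, j))"
    unfolding separable_def by blast
  have Ac: "A l \<in> carrier_mat 2 2" "B l \<in> carrier_mat 2 2" if "l < k" for l
    using pAB that unfolding density_def psd_def by auto
  have trA: "A l $$ (0,0) + A l $$ (1,1) = 1" "B l $$ (0,0) + B l $$ (1,1) = 1" if "l < k" for l
    using pAB that unfolding density_def psd_def mtrace_def by (auto simp: sum2)
  have blk: "block2 \<rho> a b = (1/2 :: complex) \<cdot>\<^sub>m E a b" if "a < 2" "b < 2" for a b
    using that unfolding E_def \<rho>_def block2_def by (intro eq_matI) (auto simp: Pplus_def)
  have \<sigma>idx: "\<sigma> $$ (i, j) = 1/2 * \<Psi> (E (i div 2) (j div 2)) $$ (i mod 2, j mod 2)" if "i < 4" "j < 4" for i j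
  proof -
    have "\<sigma> $$ (i, j) = \<Psi> (block2 \<rho> (i div 2) (j div 2)) $$ (i mod 2, j mod 2)"
      unfolding \<sigma>_def id_tensor_def using that by simp
    also have "\<dots> = ((1/2 :: complex) \<cdot>\<^sub>m \<Psi> (E (i div 2) (j div 2))) $$ (i mod 2, j mod 2)"
      using that by (simp add: blk \<Psi>sm Ec)
    also have "\<dots> = 1/2 * \<Psi> (E (i div 2) (j div 2)) $$ (i mod 2, j mod 2)"
      using \<Psi>c[OF Ec, of "i div 2" "j div 2"] by simp
    finally show ?thesis .
  qed
  have choi_idx: "choi \<Psi> $$ (i, j) = \<Psi> (E (i div 2) (j div 2)) $$ (i mod 2, j mod 2)" if "i < 4" "j < 4" for i j
    unfolding choi_def id_tensor_def E_def using that by simp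
  have choi_eq: "choi \<Psi> $$ (i, j) = 2 * (\<Sum>l<k. complex_of_real (p l) * (A l $$ (i div 2, j div 2) * B l $$ (i mod 2, j mod 2)))"
    if "i < 4" "j < 4" for i j
  proof -
    have "choi \<Psi> $$ (i, j) = 2 * \<sigma> $$ (i, j)" using that by (simp add: choi_idx \<sigma>idx)
    also have "\<dots> = 2 * (\<Sum>l<k. complex_of_real (p l) * kron (A l) (B l) $$ (i, j))" using \<sigma>eq that by simp
    also have "\<dots> = 2 * (\<Sum>l<k. complex_of_real (p l) * (A l $$ (i div 2, j div 2) * B l $$ (i mod 2, j mod 2)))"
      using that Ac by (auto intro!: sum.cong simp: kron_idx)
    finally show ?thesis .
  qed

  have margA: "(\<Sum>l<k. complex_of_real (p l) * A l $$ (a,b)) = (if a = b then 1/2 else 0)"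
    if ab: "a < 2" "b < 2" for a b
  proof -
    have i1: "2*a < 4" "2*b < 4" "2*a+1 < 4" "2*b+1 < 4" using ab by auto
    have d: "Suc (a * 2) mod 2 = 1" "Suc (b * 2) mod 2 = 1" "Suc (a * 2) div 2 = a" "Suc (b * 2) div 2 = b"
      by presburger+
    have "\<sigma> $$ (2*a, 2*b) + \<sigma> $$ (2*a+1, 2*b+1) = (\<Sum>l<k. complex_of_real (p l) * kron (A l) (B l) $$ (2*a,2*b))
        + (\<Sum>l<k. complex_of_real (p l) * kron (A l) (B l) $$ (2*a+1,2*b+1))" using \<sigma>eq i1 by simp
    also have "\<dots> = (\<Sum>l<k. complex_of_real (p l) * A l $$ (a,b) * (B l $$ (0,0) + B l $$ (1,1)))"
      unfolding sum.distrib[symmetric]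
    proof (intro sum.cong refl)
      fix l assume "l \<in> {..<k}"
      then have l: "l < k" by simp
      show "complex_of_real (p l) * kron (A l) (B l) $$ (2*a,2*b) + complex_of_real (p l) * kron (A l) (B l) $$ (2*a+1,2*b+1)
         = complex_of_real (p l) * A l $$ (a,b) * (B l $$ (0,0) + B l $$ (1,1))"
        using i1 Ac[OF l] by (simp add: kron_idx algebra_simps d)
    qed
    also have "\<dots> = (\<Sum>l<k. complex_of_real (p l) * A l $$ (a,b))"
      by (intro sum.cong refl) (simp add: trA[unfolded One_nat_def])
    finally have s1: "\<sigma> $$ (2*a, 2*b) + \<sigma> $$ (2*a+1, 2*b+1) = (\<Sum>l<k. complex_of_real (p l) * A l $$ (a,b))" .
    have "\<sigma> $$ (2*a, 2*b) + \<sigma> $$ (2*a+1, 2*b+1) = 1/2 * mtrace (\<Psi> (E a b))"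
      using i1 \<Psi>c[OF Ec, of a b] unfolding mtrace_def by (simp add: \<sigma>idx sum2 algebra_simps d)
    also have "\<dots> = 1/2 * mtrace (E a b)" using tp Ec unfolding trace_preserving_def by simp
    also have "\<dots> = (if a = b then 1/2 else 0)"
    proof -
      have "a = 0 \<or> a = 1" "b = 0 \<or> b = 1" using ab by auto
      then show ?thesis unfolding mtrace_def E_def block2_def by (auto simp: sum2 Pplus_def)
    qed
    finally show ?thesis using s1 by simp
  qed
  have E11: "E 0 0 + E 1 1 = 1\<^sub>m 2"
    unfolding E_def block2_def by (intro eq_matI) (auto simp: Pplus_def)
  have margB: "(\<Sum>l<k. complex_of_real (p l) * B l $$ (m,n)) = (if m = n then 1/2 else 0)"
    if mn: "m < 2" "n < 2" for m n
  proof -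
    have i1: "m < 4" "n < 4" "2+m < 4" "2+n < 4" using mn by auto
    have "\<sigma> $$ (m, n) + \<sigma> $$ (2+m, 2+n) = (\<Sum>l<k. complex_of_real (p l) * kron (A l) (B l) $$ (m,n))
        + (\<Sum>l<k. complex_of_real (p l) * kron (A l) (B l) $$ (2+m,2+n))" using \<sigma>eq i1 by simp
    also have "\<dots> = (\<Sum>l<k. complex_of_real (p l) * B l $$ (m,n) * (A l $$ (0,0) + A l $$ (1,1)))"
      unfolding sum.distrib[symmetric]
    proof (intro sum.cong refl)
      fix l assume "l \<in> {..<k}"
      then have l: "l < k" by simp
      show "complex_of_real (p l) * kron (A l) (B l) $$ (m,n) + complex_of_real (p l) * kron (A l) (B l) $$ (2+m,2+n)
         = complex_of_real (p l) * B l $$ (m,n) * (A l $$ (0,0) + A l $$ (1,1))"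
        using i1 mn Ac[OF l] by (simp add: kron_idx algebra_simps)
    qed
    also have "\<dots> = (\<Sum>l<k. complex_of_real (p l) * B l $$ (m,n))"
      by (intro sum.cong refl) (simp add: trA[unfolded One_nat_def])
    finally have s1: "\<sigma> $$ (m, n) + \<sigma> $$ (2+m, 2+n) = (\<Sum>l<k. complex_of_real (p l) * B l $$ (m,n))" .
    have "\<sigma> $$ (m, n) + \<sigma> $$ (2+m, 2+n) = 1/2 * (\<Psi> (E 0 0) + \<Psi> (E 1 1)) $$ (m, n)"
      using i1 mn \<Psi>c[OF Ec, of 1 1] \<Psi>c[OF Ec, of 0 0] by (simp add: \<sigma>idx algebra_simps)
    also have "\<dots> = 1/2 * \<Psi> (1\<^sub>m 2) $$ (m, n)" using \<Psi>add[OF Ec Ec, of 0 0 1 1] E11 by simp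
    also have "\<dots> = (if m = n then 1/2 else 0)" using un mn unfolding unital_def by simp
    finally show ?thesis using s1 by simp
  qed
  define a where "a l = bx (A l)" for l
  define b where "b l = bx (B l)" for l
  have za: "(\<Sum>l<k. p l * a l i) = 0" if "i < 3" for i
  proof -
    have "i = 0 \<or> i = 1 \<or> i = 2" using that by auto
    moreover have m1: "(\<Sum>l<k. p l * Re (A l $$ (0,1))) = 0"
      using arg_cong[where f=Re, OF margA[of 0 1]] by (simp add: re_sum_real)
    moreover have m2: "(\<Sum>l<k. p l * Im (A l $$ (0,1))) = 0"
      using arg_cong[where f=Im, OF margA[of 0 1]] by (simp add: im_sum_real)
    moreover have m3: "(\<Sum>l<k. p l * Re (A l $$ (0,0))) = 1/2"
      using arg_cong[where f=Re, OF margA[of 0 0]] by (simp add: re_sum_real)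
    moreover have m4: "(\<Sum>l<k. p l * Re (A l $$ (1,1))) = 1/2"
      using arg_cong[where f=Re, OF margA[of 1 1]] by (simp add: re_sum_real)
    moreover have "(\<Sum>l<k. p l * a l 0) = 2 * (\<Sum>l<k. p l * Re (A l $$ (0,1)))"
      by (simp add: a_def bx_def sum_distrib_left mult_ac)
    moreover have "(\<Sum>l<k. p l * a l 1) = - 2 * (\<Sum>l<k. p l * Im (A l $$ (0,1)))"
      by (simp add: a_def bx_def sum_distrib_left mult_ac)
    moreover have "(\<Sum>l<k. p l * a l 2) = (\<Sum>l<k. p l * Re (A l $$ (0,0))) - (\<Sum>l<k. p l * Re (A l $$ (1,1)))"
      by (simp add: a_def bx_def sum_subtractf[symmetric] algebra_simps)
    ultimately show ?thesis by auto
  qed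
  have zb: "(\<Sum>l<k. p l * b l i) = 0" if "i < 3" for i
  proof -
    have "i = 0 \<or> i = 1 \<or> i = 2" using that by auto
    moreover have m1: "(\<Sum>l<k. p l * Re (B l $$ (0,1))) = 0"
      using arg_cong[where f=Re, OF margB[of 0 1]] by (simp add: re_sum_real)
    moreover have m2: "(\<Sum>l<k. p l * Im (B l $$ (0,1))) = 0"
      using arg_cong[where f=Im, OF margB[of 0 1]] by (simp add: im_sum_real)
    moreover have m3: "(\<Sum>l<k. p l * Re (B l $$ (0,0))) = 1/2"
      using arg_cong[where f=Re, OF margB[of 0 0]] by (simp add: re_sum_real)
    moreover have m4: "(\<Sum>l<k. p l * Re (B l $$ (1,1))) = 1/2"
      using arg_cong[where f=Re, OF margB[of 1 1]] by (simp add: re_sum_real)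
    moreover have "(\<Sum>l<k. p l * b l 0) = 2 * (\<Sum>l<k. p l * Re (B l $$ (0,1)))"
      by (simp add: b_def bx_def sum_distrib_left mult_ac)
    moreover have "(\<Sum>l<k. p l * b l 1) = - 2 * (\<Sum>l<k. p l * Im (B l $$ (0,1)))"
      by (simp add: b_def bx_def sum_distrib_left mult_ac)
    moreover have "(\<Sum>l<k. p l * b l 2) = (\<Sum>l<k. p l * Re (B l $$ (0,0))) - (\<Sum>l<k. p l * Re (B l $$ (1,1)))"
      by (simp add: b_def bx_def sum_subtractf[symmetric] algebra_simps)
    ultimately show ?thesis by auto
  qed
  have choic: "choi \<Psi> \<in> carrier_mat 4 4" unfolding choi_def id_tensor_def by auto
  have "mtrace (\<tau> * choi \<Psi>) = (\<Sum>i<4. \<Sum>j<4. \<tau> $$ (i,j) * choi \<Psi> $$ (j,i))"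
    by (rule mtrace_mult[OF \<tau>c choic])
  also have "\<dots> = (\<Sum>i<4. \<Sum>j<4. \<tau> $$ (i,j) * (2 * (\<Sum>l<k. complex_of_real (p l) * (A l $$ (j div 2, i div 2) * B l $$ (j mod 2, i mod 2)))))"
    by (intro sum.cong refl) (simp add: choi_eq)
  also have "\<dots> = 2 * (\<Sum>l<k. complex_of_real (p l) * tr4 \<tau> (A l) (B l))"
    unfolding tr4_def by (simp add: sum_distrib_left sum.swap[of _ "{..<k}"] mult_ac)
  finally have mt: "mtrace (\<tau> * choi \<Psi>) = 2 * (\<Sum>l<k. complex_of_real (p l) * tr4 \<tau> (A l) (B l))" .
  have "Re (mtrace (\<tau> * choi \<Psi>)) = 2 * Re (\<Sum>l<k. complex_of_real (p l) * tr4 \<tau> (A l) (B l))"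
    unfolding mt by simp
  also have "\<dots> = 2 * (\<Sum>l<k. p l * Re (tr4 \<tau> (A l) (B l)))" by (simp only: re_sum_real)
  finally have ret: "Re (mtrace (\<tau> * choi \<Psi>)) = 2 * (\<Sum>l<k. p l * Re (tr4 \<tau> (A l) (B l)))" .
  define R where "R i = Re (tr4 \<tau> (pauli (i+1)) (1\<^sub>m 2))" for i
  define S where "S j = Re (tr4 \<tau> (1\<^sub>m 2) (pauli (j+1)))" for j
  define L where "L l = (\<Sum>i<3. a l i * R i)" for l
  define M where "M l = (\<Sum>j<3. b l j * S j)" for l
  define Q where "Q l = (\<Sum>i<3. \<Sum>j<3. a l i * b l j * corr \<tau> $$ (i,j))" for l
  have tr11: "Re (tr4 \<tau> (1\<^sub>m 2) (1\<^sub>m 2)) = 1"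
  proof -
    have "tr4 \<tau> (1\<^sub>m 2) (1\<^sub>m 2) = mtrace \<tau>"
      using \<tau>c unfolding tr4_def mtrace_def by (simp add: sum4)
    then show ?thesis using tr\<tau> by simp
  qed
  have per: "Re (tr4 \<tau> (A l) (B l)) = 1/4 * (1 + L l + M l + Q l)" if l: "l < k" for l
  proof -
    have dA: "density 2 (A l)" and dB: "density 2 (B l)" using pAB l by auto
    have "Re (tr4 \<tau> (A l) (B l)) = 1/4 * (Re (tr4 \<tau> (1\<^sub>m 2) (1\<^sub>m 2))
     + (\<Sum>i<3. a l i * Re (tr4 \<tau> (pauli (i+1)) (1\<^sub>m 2)))
     + (\<Sum>j<3. b l j * Re (tr4 \<tau> (1\<^sub>m 2) (pauli (j+1))))
     + (\<Sum>i<3. \<Sum>j<3. a l i * b l j * Re (tr4 \<tau> (pauli (i+1)) (pauli (j+1)))))"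
      unfolding a_def b_def
      by (rule key[OF density_bloch(2-5)[OF dA] density_bloch(2-5)[OF dB]])
    moreover have "(\<Sum>i<3. \<Sum>j<3. a l i * b l j * Re (tr4 \<tau> (pauli (i+1)) (pauli (j+1)))) = Q l"
      unfolding Q_def by (intro sum.cong refl) (simp add: corr_idx[OF \<tau>c])
    ultimately show ?thesis unfolding L_def M_def R_def S_def tr11 by simp
  qed
  have sumL: "(\<Sum>l<k. p l * L l) = 0"
  proof -
    have "(\<Sum>l<k. p l * L l) = (\<Sum>i<3. R i * (\<Sum>l<k. p l * a l i))"
      unfolding L_def by (simp add: sum_distrib_left sum.swap[of _ "{..<k}"] mult_ac)
    also have "\<dots> = 0" by (intro sum.neutral) (simp add: za)
    finally show ?thesis .
  qed
  have sumM: "(\<Sum>l<k. p l * M l) = 0"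
  proof -
    have "(\<Sum>l<k. p l * M l) = (\<Sum>i<3. S i * (\<Sum>l<k. p l * b l i))"
      unfolding M_def by (simp add: sum_distrib_left sum.swap[of _ "{..<k}"] mult_ac)
    also have "\<dots> = 0" by (intro sum.neutral) (simp add: zb)
    finally show ?thesis .
  qed
  have sumQ: "(\<Sum>l<k. p l * Q l) \<le> opnorm3 (corr \<tau>)"
  proof -
    have "(\<Sum>l<k. p l * Q l) \<le> (\<Sum>l<k. p l * opnorm3 (corr \<tau>))"
    proof (rule sum_mono)
      fix l assume "l \<in> {..<k}"
      then have l: "l < k" by simp
      have dA: "density 2 (A l)" and dB: "density 2 (B l)" and p0: "p l \<ge> 0" using pAB l by auto
      have "Q l \<le> opnorm3 (corr \<tau>)" unfolding Q_def a_def b_def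
        by (rule opnorm_bound[OF density_bloch(1)[OF dA] density_bloch(1)[OF dB]])
      then show "p l * Q l \<le> p l * opnorm3 (corr \<tau>)" using p0 by (rule mult_left_mono)
    qed
    also have "\<dots> = opnorm3 (corr \<tau>)" using p1 by (simp add: sum_distrib_right[symmetric])
    finally show ?thesis .
  qed
  have "(\<Sum>l<k. p l * Re (tr4 \<tau> (A l) (B l))) = (\<Sum>l<k. p l * (1/4 * (1 + L l + M l + Q l)))"
    by (intro sum.cong refl) (simp add: per)
  also have "\<dots> = (\<Sum>l<k. 1/4 * p l + 1/4 * (p l * L l) + 1/4 * (p l * M l) + 1/4 * (p l * Q l))"
    by (intro sum.cong refl) (simp add: algebra_simps)
  also have "\<dots> = 1/4 * (\<Sum>l<k. p l) + 1/4 * (\<Sum>l<k. p l * L l) + 1/4 * (\<Sum>l<k. p l * M l) + 1/4 * (\<Sum>l<k. p l * Q l)"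
    by (simp only: sum.distrib sum_distrib_left)
  finally have "(\<Sum>l<k. p l * Re (tr4 \<tau> (A l) (B l))) = 1/4 + 1/4 * (\<Sum>l<k. p l * Q l)"
    using p1 sumL sumM by simp
  then show ?thesis using ret sumQ by simp
qed

end
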